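(* Let $k$ be a field of characteristic $2$, $g = x^2+y^2z+yz^2+xyz$, $m\ge 0$, $R_m = k[x_0,\dots,x_m,y_0,\dots,y_m,z_0,\dots,z_m]$. For positive integers $p,q,r\le m+1$ set $\mathbf{x}_p=\sum_{i=p}^m x_it^i$, $\mathbf{y}_q=\sum_{i=q}^m y_it^i$, $\mathbf{z}_r=\sum_{i=r}^m z_it^i$, and define $G_{pqr}^{(l)}\in R_m$ ($0\le l\le m$) by $g(\mathbf{x}_p,\mathbf{y}_q,\mathbf{z}_r)=\sum_{l=0}^m G_{pqr}^{(l)}t^l$ in $R_m[t]/\langle t^{m+1}\rangle$. Then for $0\le l\le m$, $$G_{pqr}^{(l)} = \sum_{u\ge p,\,2u=l} x_u^2 + \sum_{v\ge q,\,w\ge r,\,2v+w=l} y_v^2z_w + \sum_{v\ge q,\,w\ge r,\,v+2w=l} y_vz_w^2 + \sum_{u\ge p,\,v\ge q,\,w\ge r,\,u+v+w=l} x_uy_vz_w$$ (empty sums being $0$). Furthermore: (1) If $l<2p$, $l<2q+r$ and $l<q+2r$, then $G_{pqr}^{(l)}=0$. (2) If $l=2p$, $l<2q+r$ and $l<q+2r$, then $G_{pqr}^{(l)}=x_p^2$. (3) If $p>q=r$ and $l=2p=3q$, then $G_{pqq}^{(l)}=x_p^2+y_q^2z_q+y_qz_q^2$. (4) If $p\ge q>r$ and $l\ge 2p=q+2r$, then $T_y(G_{pqr}^{(l)})=y_{l-2r}z_r^2$. (5) If $p\ge r>q$ and $l\ge 2p=2q+r$, then $T_z(G_{pqr}^{(l)})=y_q^2z_{l-2q}$.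 (6) If $p>q=r$ and $l>3q$, then $T_y(G_{pqq}^{(l)})=y_{l-2q}z_q^2$. (7) If $p>q=r$ and $l>3q$, then $T_z(G_{pqq}^{(l)})=y_q^2z_{l-2q}$.
   Context: For $h\in R_m$, let $i_0$ be the largest index $i$ such that $y_i$ occurs in $h$; $T_y(h)$ denotes the sum of the terms (monomials with their coefficients) of $h$ containing $y_{i_0}$. $T_z(h)$ is defined analogously with the variables $z_i$. *)

theory Defs
  imports "HOL-Library.Poly_Mapping" "HOL-Computational_Algebra.Polynomial"
begin

text \<open>Variables of R_m: x_i, y_i, z_i (only indices i \<le> m are ever used).\<close>
datatype var = X nat | Y nat | Z nat

type_synonym 'a mpoly = "(var \<Rightarrow>\<^sub>0 nat) \<Rightarrow>\<^sub>0 'a"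

definition Var :: "var \<Rightarrow> 'a::comm_semiring_1 mpoly" where
  "Var v = Poly_Mapping.single (Poly_Mapping.single v 1) 1"

definition gpoly :: "'b::comm_semiring_1 \<Rightarrow> 'b \<Rightarrow> 'b \<Rightarrow> 'b" where
  "gpoly a b c = a^2 + b^2 * c + b * c^2 + a * b * c"

definition arc :: "(nat \<Rightarrow> var) \<Rightarrow> nat \<Rightarrow> nat \<Rightarrow> 'a::comm_semiring_1 mpoly poly" where
  "arc V p m = (\<Sum>i\<in>{p..m}. monom (Var (V i)) i)"

text \<open>G_{pqr}^{(l)}: coefficient of t^l of g(x_p,y_q,z_r); for l \<le> m this is the
  coefficient of t^l in R_m[t]/(t^{m+1}).\<close>
definition Gc :: "nat \<Rightarrow> nat \<Rightarrow> nat \<Rightarrow> nat \<Rightarrow> nat \<Rightarrow> 'a::comm_semiring_1 mpoly" where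
  "Gc m p q r l = coeff (gpoly (arc X p m) (arc Y q m) (arc Z r m)) l"

definition Ty :: "'a::comm_semiring_1 mpoly \<Rightarrow> 'a mpoly" where
  "Ty h = (let i0 = Max {i. \<exists>mon\<in>Poly_Mapping.keys h. Y i \<in> Poly_Mapping.keys mon}
           in \<Sum>mon\<in>{mon\<in>Poly_Mapping.keys h. Y i0 \<in> Poly_Mapping.keys mon}. Poly_Mapping.single mon (Poly_Mapping.lookup h mon))"

definition Tz :: "'a::comm_semiring_1 mpoly \<Rightarrow> 'a mpoly" where
  "Tz h = (let i0 = Max {i. \<exists>mon\<in>Poly_Mapping.keys h. Z i \<in> Poly_Mapping.keys mon}
           in \<Sum>mon\<in>{mon\<in>Poly_Mapping.keys h. Z i0 \<in> Poly_Mapping.keys mon}. Poly_Mapping.single mon (Poly_Mapping.lookup h mon))"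

end

theory Submission
  imports Defs
begin


lemma two_zero_mpoly:
  assumes "CHAR('a::field) = 2" shows "(2::'a mpoly) = 0"
proof -
  have "(of_nat 2::'a) = 0" using of_nat_CHAR[where 'a='a] assms by simp
  hence "(2::'a) = 0" by simp
  hence "(Poly_Mapping.single 0 (2::'a) :: 'a mpoly) = 0" by simp
  thus ?thesis by (metis single_numeral)
qed

lemma frob_add:
  fixes a b :: "'b::comm_ring_1" assumes "(2::'b) = 0"
  shows "(a+b)^2 = a^2 + b^2"
proof -
  have "(a+b)^2 = a^2 + b^2 + 2*a*b" by (simp add: power2_eq_square algebra_simps)
  thus ?thesis using assms by simp
qed

lemma frob_sum:
  fixes f :: "'i \<Rightarrow> 'b::comm_ring_1" assumes "(2::'b) = 0"
  shows "(sum f A)^2 = (\<Sum>i\<in>A. (f i)^2)"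
proof (induction A rule: infinite_finite_induct)
  case (insert x F) thus ?case using frob_add[OF assms] by simp
qed auto

lemma two_zero_poly: assumes "(2::'b::comm_ring_1) = 0" shows "(2::'b poly) = 0"
  by (metis assms of_nat_numeral of_nat_poly pCons_0_0 smult_0_left smult_pCons smult_0_right)

lemma coeff_sum_monom:
  assumes "finite A"
  shows "coeff (\<Sum>i\<in>A. monom (f i) (e i)) l = (\<Sum>i\<in>{i\<in>A. e i = l}. f i)"
  using assms by (simp add: coeff_sum coeff_monom sum.inter_filter)

lemma monom_sum_mult:
  "(\<Sum>i\<in>A. monom (f i) (e i)) * (\<Sum>j\<in>B. monom (g j) (d j)) =
   (\<Sum>s\<in>A\<times>B. monom (f (fst s) * g (snd s)) (e (fst s) + d (snd s)))"
  by (simp add: sum_product mult_monom sum.cartesian_product split_def)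

lemma arc_sq:
  assumes "(2::'a::comm_ring_1 mpoly) = 0"
  shows "(arc V p m :: 'a mpoly poly)^2 = (\<Sum>i\<in>{p..m}. monom (Var (V i)^2) (2*i))"
  unfolding arc_def using assms
  by (simp add: frob_sum two_zero_poly monom_power mult.commute)

lemma Gc_formula:
  fixes m p q r l :: nat
  assumes char2: "CHAR('a::field) = 2" and l: "l \<le> m"
  shows "((Gc m p q r l :: 'a mpoly) =
           (\<Sum>u\<in>{u. p \<le> u \<and> 2*u = l}. Var (X u)^2)
         + (\<Sum>(v,w)\<in>{(v,w). q \<le> v \<and> r \<le> w \<and> 2*v + w = l}. Var (Y v)^2 * Var (Z w))
         + (\<Sum>(v,w)\<in>{(v,w). q \<le> v \<and> r \<le> w \<and> v + 2*w = l}. Var (Y v) * Var (Z w)^2)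
         + (\<Sum>(u,v,w)\<in>{(u,v,w). p \<le> u \<and> q \<le> v \<and> r \<le> w \<and> u + v + w = l}.
               Var (X u) * Var (Y v) * Var (Z w)))"
proof -
  have two: "(2::'a mpoly) = 0" by (rule two_zero_mpoly[OF char2])
  note sq = arc_sq[OF two]
  let ?A = "arc X p m :: 'a mpoly poly" and ?B = "arc Y q m :: 'a mpoly poly" and ?C = "arc Z r m :: 'a mpoly poly"
  have c1: "coeff (?A^2) l = (\<Sum>u\<in>{u. p \<le> u \<and> 2*u = l}. Var (X u)^2)"
    unfolding sq using l by (subst coeff_sum_monom) (auto intro!: sum.cong)
  have c2: "coeff (?B^2 * ?C) l = (\<Sum>(v,w)\<in>{(v,w). q \<le> v \<and> r \<le> w \<and> 2*v + w = l}. Var (Y v)^2 * Var (Z w))"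
    unfolding sq unfolding arc_def monom_sum_mult
    using l by (subst coeff_sum_monom) (auto intro!: sum.cong simp: split_def)
  have c3: "coeff (?B * ?C^2) l = (\<Sum>(v,w)\<in>{(v,w). q \<le> v \<and> r \<le> w \<and> v + 2*w = l}. Var (Y v) * Var (Z w)^2)"
    unfolding sq unfolding arc_def monom_sum_mult
    using l by (subst coeff_sum_monom) (auto intro!: sum.cong simp: split_def)
  have c4: "coeff (?A * ?B * ?C) l = (\<Sum>(u,v,w)\<in>{(u,v,w). p \<le> u \<and> q \<le> v \<and> r \<le> w \<and> u + v + w = l}.
               Var (X u) * Var (Y v) * Var (Z w))"
  proof -
    have "coeff (?A * ?B * ?C) l = (\<Sum>s\<in>{s\<in>({p..m}\<times>{q..m})\<times>{r..m}. fst (fst s) + snd (fst s) + snd s = l}.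
           Var (X (fst (fst s))) * Var (Y (snd (fst s))) * Var (Z (snd s)))"
      unfolding arc_def monom_sum_mult by (subst coeff_sum_monom) auto
    also have "\<dots> = (\<Sum>(u,v,w)\<in>(\<lambda>s. (fst (fst s), snd (fst s), snd s)) ` {s\<in>({p..m}\<times>{q..m})\<times>{r..m}. fst (fst s) + snd (fst s) + snd s = l}.
               Var (X u) * Var (Y v) * Var (Z w))"
      by (subst sum.reindex) (auto simp: inj_on_def split_def)
    also have "(\<lambda>s. (fst (fst s), snd (fst s), snd s)) ` {s\<in>({p..m}\<times>{q..m})\<times>{r..m}. fst (fst s) + snd (fst s) + snd s = l}
       = {(u,v,w). p \<le> u \<and> q \<le> v \<and> r \<le> w \<and> u + v + w = l}"
      using l by (auto simp: image_iff) 
    finally show ?thesis .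
  qed
  show ?thesis unfolding Gc_def gpoly_def using c1 c2 c3 c4 by simp
qed

abbreviation sg :: "var \<Rightarrow> nat \<Rightarrow> var \<Rightarrow>\<^sub>0 nat" where "sg \<equiv> Poly_Mapping.single"

definition M1 :: "nat \<Rightarrow> var \<Rightarrow>\<^sub>0 nat" where "M1 u = sg (X u) 2"
definition M2 :: "nat \<times> nat \<Rightarrow> var \<Rightarrow>\<^sub>0 nat" where
  "M2 s = (case s of (v,w) \<Rightarrow> sg (Y v) 2 + sg (Z w) 1)"
definition M3 :: "nat \<times> nat \<Rightarrow> var \<Rightarrow>\<^sub>0 nat" where
  "M3 s = (case s of (v,w) \<Rightarrow> sg (Y v) 1 + sg (Z w) 2)"
definition M4 :: "nat \<times> nat \<times> nat \<Rightarrow> var \<Rightarrow>\<^sub>0 nat" where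
  "M4 s = (case s of (u,v,w) \<Rightarrow> sg (X u) 1 + sg (Y v) 1 + sg (Z w) 1)"

definition S1 :: "nat \<Rightarrow> nat \<Rightarrow> nat set" where "S1 p l = {u. p \<le> u \<and> 2*u = l}"
definition S2 :: "nat \<Rightarrow> nat \<Rightarrow> nat \<Rightarrow> (nat\<times>nat) set" where
  "S2 q r l = {(v,w). q \<le> v \<and> r \<le> w \<and> 2*v + w = l}"
definition S3 :: "nat \<Rightarrow> nat \<Rightarrow> nat \<Rightarrow> (nat\<times>nat) set" where
  "S3 q r l = {(v,w). q \<le> v \<and> r \<le> w \<and> v + 2*w = l}"
definition S4 :: "nat \<Rightarrow> nat \<Rightarrow> nat \<Rightarrow> nat \<Rightarrow> (nat\<times>nat\<times>nat) set" where
  "S4 p q r l = {(u,v,w). p \<le> u \<and> q \<le> v \<and> r \<le> w \<and> u + v + w = l}"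

definition H :: "nat \<Rightarrow> nat \<Rightarrow> nat \<Rightarrow> nat \<Rightarrow> 'a::comm_semiring_1 mpoly" where
  "H p q r l = (\<Sum>u\<in>S1 p l. Poly_Mapping.single (M1 u) 1) + (\<Sum>s\<in>S2 q r l. Poly_Mapping.single (M2 s) 1)
     + (\<Sum>s\<in>S3 q r l. Poly_Mapping.single (M3 s) 1) + (\<Sum>s\<in>S4 p q r l. Poly_Mapping.single (M4 s) 1)"

lemma fin_S: "finite (S1 p l)" "finite (S2 q r l)" "finite (S3 q r l)" "finite (S4 p q r l)"
proof -
  show "finite (S1 p l)" by (rule finite_subset[of _ "{..l}"]) (auto simp: S1_def)
  show "finite (S2 q r l)" by (rule finite_subset[of _ "{..l}\<times>{..l}"]) (auto simp: S2_def)
  show "finite (S3 q r l)" by (rule finite_subset[of _ "{..l}\<times>{..l}"]) (auto simp: S3_def)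
  show "finite (S4 p q r l)" by (rule finite_subset[of _ "{..l}\<times>{..l}\<times>{..l}"]) (auto simp: S4_def)
qed

lemma Var_sq: "(Var a :: 'a::comm_semiring_1 mpoly)^2 = Poly_Mapping.single (sg a 2) 1"
proof -
  have "sg a 2 = sg a 1 + sg a 1" by (metis one_add_one single_add)
  thus ?thesis by (simp add: Var_def power2_eq_square mult_single)
qed

lemma Var_mult: "(Var a :: 'a::comm_semiring_1 mpoly) * Poly_Mapping.single k 1 = Poly_Mapping.single (sg a 1 + k) 1"
  by (simp add: Var_def mult_single)

lemma Gc_H:
  assumes char2: "CHAR('a::field) = 2" and l: "l \<le> m"
  shows "(Gc m p q r l :: 'a mpoly) = H p q r l"
proof -
  have e1: "Var (X u)^2 = (Poly_Mapping.single (M1 u) 1 :: 'a mpoly)" for u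
    by (simp only: Var_sq M1_def)
  have e2: "Var (Y v)^2 * Var (Z w) = (Poly_Mapping.single (M2 (v,w)) 1 :: 'a mpoly)" for v w
    by (simp only: Var_sq) (simp add: M2_def Var_def mult_single add.commute)
  have e3: "Var (Y v) * Var (Z w)^2 = (Poly_Mapping.single (M3 (v,w)) 1 :: 'a mpoly)" for v w
    by (simp only: Var_sq) (simp add: M3_def Var_def mult_single add.commute)
  have e4: "Var (X u) * Var (Y v) * Var (Z w) = (Poly_Mapping.single (M4 (u,v,w)) 1 :: 'a mpoly)" for u v w
    by (simp add: M4_def Var_def mult_single add.commute add.assoc)
  show ?thesis unfolding Gc_formula[OF assms] H_def
    by (simp add: S1_def S2_def S3_def S4_def e1 split_def e2 e3 e4 cong: sum.cong)
qed

lemma Ty_gen: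
  fixes h :: "'a::{comm_semiring_1,zero_neq_one} mpoly"
  assumes bound: "\<And>mon i. Poly_Mapping.lookup h mon \<noteq> 0 \<Longrightarrow> Poly_Mapping.lookup mon (Y i) \<noteq> 0 \<Longrightarrow> i \<le> n \<and> (i = n \<longrightarrow> mon = M0)"
    and h0: "Poly_Mapping.lookup h M0 = 1" and m0: "Poly_Mapping.lookup M0 (Y n) \<noteq> 0"
  shows "Ty h = Poly_Mapping.single M0 1"
proof -
  have M0k: "M0 \<in> Poly_Mapping.keys h" using h0 by (simp add: Poly_Mapping.in_keys_iff)
  have S: "{i. \<exists>mon\<in>Poly_Mapping.keys h. Y i \<in> Poly_Mapping.keys mon} \<subseteq> {..n}"
  proof
    fix i assume "i \<in> {i. \<exists>mon\<in>Poly_Mapping.keys h. Y i \<in> Poly_Mapping.keys mon}"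
    then obtain mon where "mon \<in> Poly_Mapping.keys h" "Y i \<in> Poly_Mapping.keys mon" by blast
    hence "Poly_Mapping.lookup h mon \<noteq> 0" "Poly_Mapping.lookup mon (Y i) \<noteq> 0" by (simp_all add: Poly_Mapping.in_keys_iff)
    from bound[OF this] show "i \<in> {..n}" by simp
  qed
  have "Y n \<in> Poly_Mapping.keys M0" using m0 by (simp add: Poly_Mapping.in_keys_iff)
  hence nS: "n \<in> {i. \<exists>mon\<in>Poly_Mapping.keys h. Y i \<in> Poly_Mapping.keys mon}" using M0k by blast
  have mx: "Max {i. \<exists>mon\<in>Poly_Mapping.keys h. Y i \<in> Poly_Mapping.keys mon} = n"
    by (rule Max_eqI) (use S nS finite_subset[OF S] in blast)+
  have st: "{mon\<in>Poly_Mapping.keys h. Y n \<in> Poly_Mapping.keys mon} = {M0}"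
  proof (intro equalityI subsetI)
    fix mon assume "mon \<in> {mon\<in>Poly_Mapping.keys h. Y n \<in> Poly_Mapping.keys mon}"
    hence "Poly_Mapping.lookup h mon \<noteq> 0" "Poly_Mapping.lookup mon (Y n) \<noteq> 0" by (simp_all add: Poly_Mapping.in_keys_iff)
    from bound[OF this] show "mon \<in> {M0}" by simp
  next
    fix mon assume "mon \<in> {M0}"
    thus "mon \<in> {mon\<in>Poly_Mapping.keys h. Y n \<in> Poly_Mapping.keys mon}" using M0k m0 by (simp add: Poly_Mapping.in_keys_iff)
  qed
  show ?thesis unfolding Ty_def Let_def mx st using h0 by simp
qed

lemma Tz_gen:
  fixes h :: "'a::{comm_semiring_1,zero_neq_one} mpoly"
  assumes bound: "\<And>mon i. Poly_Mapping.lookup h mon \<noteq> 0 \<Longrightarrow> Poly_Mapping.lookup mon (Z i) \<noteq> 0 \<Longrightarrow> i \<le> n \<and> (i = n \<longrightarrow> mon = M0)"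
    and h0: "Poly_Mapping.lookup h M0 = 1" and m0: "Poly_Mapping.lookup M0 (Z n) \<noteq> 0"
  shows "Tz h = Poly_Mapping.single M0 1"
proof -
  have M0k: "M0 \<in> Poly_Mapping.keys h" using h0 by (simp add: Poly_Mapping.in_keys_iff)
  have S: "{i. \<exists>mon\<in>Poly_Mapping.keys h. Z i \<in> Poly_Mapping.keys mon} \<subseteq> {..n}"
  proof
    fix i assume "i \<in> {i. \<exists>mon\<in>Poly_Mapping.keys h. Z i \<in> Poly_Mapping.keys mon}"
    then obtain mon where "mon \<in> Poly_Mapping.keys h" "Z i \<in> Poly_Mapping.keys mon" by blast
    hence "Poly_Mapping.lookup h mon \<noteq> 0" "Poly_Mapping.lookup mon (Z i) \<noteq> 0" by (simp_all add: Poly_Mapping.in_keys_iff)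
    from bound[OF this] show "i \<in> {..n}" by simp
  qed
  have "Z n \<in> Poly_Mapping.keys M0" using m0 by (simp add: Poly_Mapping.in_keys_iff)
  hence nS: "n \<in> {i. \<exists>mon\<in>Poly_Mapping.keys h. Z i \<in> Poly_Mapping.keys mon}" using M0k by blast
  have mx: "Max {i. \<exists>mon\<in>Poly_Mapping.keys h. Z i \<in> Poly_Mapping.keys mon} = n"
    by (rule Max_eqI) (use S nS finite_subset[OF S] in blast)+
  have st: "{mon\<in>Poly_Mapping.keys h. Z n \<in> Poly_Mapping.keys mon} = {M0}"
  proof (intro equalityI subsetI)
    fix mon assume "mon \<in> {mon\<in>Poly_Mapping.keys h. Z n \<in> Poly_Mapping.keys mon}"
    hence "Poly_Mapping.lookup h mon \<noteq> 0" "Poly_Mapping.lookup mon (Z n) \<noteq> 0" by (simp_all add: Poly_Mapping.in_keys_iff)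
    from bound[OF this] show "mon \<in> {M0}" by simp
  next
    fix mon assume "mon \<in> {M0}"
    thus "mon \<in> {mon\<in>Poly_Mapping.keys h. Z n \<in> Poly_Mapping.keys mon}" using M0k m0 by (simp add: Poly_Mapping.in_keys_iff)
  qed
  show ?thesis unfolding Tz_def Let_def mx st using h0 by simp
qed

lemma lk_nz:
  assumes "Poly_Mapping.lookup (\<Sum>s\<in>S. Poly_Mapping.single (M s) (1::'a::comm_semiring_1)) mon \<noteq> 0"
  shows "\<exists>s\<in>S. M s = mon"
proof -
  from assms have "(\<Sum>s\<in>S. Poly_Mapping.lookup (Poly_Mapping.single (M s) (1::'a)) mon) \<noteq> 0" by (simp add: lookup_sum)
  then obtain s where "s \<in> S" "Poly_Mapping.lookup (Poly_Mapping.single (M s) (1::'a)) mon \<noteq> 0"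
    using sum.not_neutral_contains_not_neutral by blast
  thus ?thesis by (auto simp: lookup_single when_def split: if_splits)
qed

lemma lk0:
  assumes "\<forall>s\<in>S. M s \<noteq> mon"
  shows "Poly_Mapping.lookup (\<Sum>s\<in>S. Poly_Mapping.single (M s) (1::'a::comm_semiring_1)) mon = 0"
  using assms by (simp add: lookup_sum lookup_single when_def)

lemma lk1:
  assumes "finite S" "s0 \<in> S" "\<forall>s\<in>S. M s = mon \<longleftrightarrow> s = s0"
  shows "Poly_Mapping.lookup (\<Sum>s\<in>S. Poly_Mapping.single (M s) (1::'a::comm_semiring_1)) mon = 1"
proof -
  have "Poly_Mapping.lookup (\<Sum>s\<in>S. Poly_Mapping.single (M s) (1::'a)) mon = (\<Sum>s\<in>S. if s = s0 then 1 else 0)"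
    unfolding lookup_sum lookup_single when_def using assms(3) by (intro sum.cong) auto
  thus ?thesis using assms by simp
qed

lemma H_nz:
  assumes "Poly_Mapping.lookup (H p q r l :: 'a::comm_semiring_1 mpoly) mon \<noteq> 0"
  shows "(\<exists>u\<in>S1 p l. M1 u = mon) \<or> (\<exists>s\<in>S2 q r l. M2 s = mon) \<or> (\<exists>s\<in>S3 q r l. M3 s = mon) \<or> (\<exists>s\<in>S4 p q r l. M4 s = mon)"
proof -
  from assms have "Poly_Mapping.lookup (\<Sum>u\<in>S1 p l. Poly_Mapping.single (M1 u) (1::'a)) mon \<noteq> 0 \<or>
    Poly_Mapping.lookup (\<Sum>s\<in>S2 q r l. Poly_Mapping.single (M2 s) (1::'a)) mon \<noteq> 0 \<or>
    Poly_Mapping.lookup (\<Sum>s\<in>S3 q r l. Poly_Mapping.single (M3 s) (1::'a)) mon \<noteq> 0 \<or>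
    Poly_Mapping.lookup (\<Sum>s\<in>S4 p q r l. Poly_Mapping.single (M4 s) (1::'a)) mon \<noteq> 0"
    unfolding H_def lookup_add by auto
  thus ?thesis using lk_nz[where 'a='a, of M1 "S1 p l" mon] lk_nz[where 'a='a, of M2 "S2 q r l" mon]
    lk_nz[where 'a='a, of M3 "S3 q r l" mon] lk_nz[where 'a='a, of M4 "S4 p q r l" mon] by blast
qed

lemma lkM: "Poly_Mapping.lookup (M1 u) k = (if k = X u then 2 else 0)"
  "Poly_Mapping.lookup (M2 (v,w)) k = (if k = Y v then 2 else 0) + (if k = Z w then 1 else 0)"
  "Poly_Mapping.lookup (M3 (v,w)) k = (if k = Y v then 1 else 0) + (if k = Z w then 2 else 0)"
  "Poly_Mapping.lookup (M4 (u,v,w)) k = (if k = X u then 1 else 0) + (if k = Y v then 1 else 0) + (if k = Z w then 1 else 0)"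
  by (simp_all add: M1_def M2_def M3_def M4_def lookup_add lookup_single when_def)

lemma neq_lk: "Poly_Mapping.lookup a k \<noteq> Poly_Mapping.lookup b k \<Longrightarrow> a \<noteq> b" by auto



lemma H_Ty:
  assumes "r < p" "3*r < l" "q + 2*r \<le> l"
  shows "Ty (H p q r l :: 'a::{comm_semiring_1,zero_neq_one} mpoly) = Poly_Mapping.single (M3 (l-2*r, r)) 1"
proof (rule Ty_gen)
  let ?n = "l - 2*r" and ?M0 = "M3 (l-2*r, r)"
  show "Poly_Mapping.lookup ?M0 (Y ?n) \<noteq> 0" by (simp add: lkM)
  fix mon i assume nz: "Poly_Mapping.lookup (H p q r l :: 'a mpoly) mon \<noteq> 0" and yi: "Poly_Mapping.lookup mon (Y i) \<noteq> 0"
  from H_nz[OF nz] show "i \<le> ?n \<and> (i = ?n \<longrightarrow> mon = ?M0)"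
  proof (elim disjE bexE)
    fix u assume "M1 u = mon" thus ?thesis using yi by (auto simp: lkM)
  next
    fix s assume s: "s \<in> S2 q r l" "M2 s = mon"
    obtain v w where sv: "s = (v,w)" by (cases s)
    have "v = i" using yi unfolding s(2)[symmetric] sv by (simp add: lkM split: if_splits)
    moreover have "2*v + w = l" "r \<le> w" using s sv by (auto simp: S2_def)
    ultimately show ?thesis using assms by linarith
  next
    fix s assume s: "s \<in> S3 q r l" "M3 s = mon"
    obtain v w where sv: "s = (v,w)" by (cases s)
    have "v = i" using yi unfolding s(2)[symmetric] sv by (simp add: lkM split: if_splits)
    moreover have "v + 2*w = l" "r \<le> w" using s sv by (auto simp: S3_def)
    ultimately have "i \<le> ?n" "i = ?n \<longrightarrow> w = r" using assms by linarith+
    thus ?thesis using s sv \<open>v = i\<close> by auto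
  next
    fix s assume s: "s \<in> S4 p q r l" "M4 s = mon"
    obtain u v w where sv: "s = (u,v,w)" by (cases s)
    have "v = i" using yi unfolding s(2)[symmetric] sv by (simp add: lkM split: if_splits)
    moreover have "u + v + w = l" "r \<le> w" "p \<le> u" using s sv by (auto simp: S4_def)
    ultimately show ?thesis using assms by linarith
  qed
next
  let ?n = "l - 2*r" and ?M0 = "M3 (l-2*r, r)"
  have a: "\<forall>s\<in>S1 p l. M1 s \<noteq> ?M0" by (auto intro!: neq_lk[where k="Z r"] simp: lkM)
  have b: "\<forall>s\<in>S2 q r l. M2 s \<noteq> ?M0"
  proof
    fix s assume s: "s \<in> S2 q r l"
    obtain v w where sv: "s = (v,w)" by (cases s)
    have "2*v + w = l" "r \<le> w" using s sv by (auto simp: S2_def)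
    hence "v \<noteq> ?n" using assms by linarith
    hence "Poly_Mapping.lookup (M2 s) (Y ?n) \<noteq> Poly_Mapping.lookup ?M0 (Y ?n)" using sv by (simp add: lkM)
    thus "M2 s \<noteq> ?M0" by (rule neq_lk)
  qed
  have c: "\<forall>s\<in>S3 q r l. M3 s = ?M0 \<longleftrightarrow> s = (?n, r)"
  proof
    fix s assume s: "s \<in> S3 q r l"
    obtain v w where sv: "s = (v,w)" by (cases s)
    show "M3 s = ?M0 \<longleftrightarrow> s = (?n, r)"
    proof
      assume e: "M3 s = ?M0"
      have "Poly_Mapping.lookup (M3 s) (Z r) = Poly_Mapping.lookup ?M0 (Z r)" using e by simp
      hence "w = r" using sv by (simp add: lkM split: if_splits)
      moreover have "v + 2*w = l" using s sv by (auto simp: S3_def)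
      ultimately show "s = (?n, r)" using sv by auto
    qed simp
  qed
  have d: "\<forall>s\<in>S4 p q r l. M4 s \<noteq> ?M0"
  proof
    fix s assume s: "s \<in> S4 p q r l"
    obtain u v w where sv: "s = (u,v,w)" by (cases s)
    have "Poly_Mapping.lookup (M4 s) (Z r) \<noteq> Poly_Mapping.lookup ?M0 (Z r)" using sv by (simp add: lkM)
    thus "M4 s \<noteq> ?M0" by (rule neq_lk)
  qed
  have c0: "(?n, r) \<in> S3 q r l" using assms by (auto simp: S3_def)
  show "Poly_Mapping.lookup (H p q r l :: 'a mpoly) ?M0 = 1" unfolding H_def lookup_add
    using lk0[where 'a='a, OF a] lk0[where 'a='a, OF b] lk1[where 'a='a, OF fin_S(3) c0 c] lk0[where 'a='a, OF d] by simp
qed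

lemma H_Tz:
  assumes "q < p" "3*q < l" "2*q + r \<le> l"
  shows "Tz (H p q r l :: 'a::{comm_semiring_1,zero_neq_one} mpoly) = Poly_Mapping.single (M2 (q, l-2*q)) 1"
proof (rule Tz_gen)
  let ?n = "l - 2*q" and ?M0 = "M2 (q, l-2*q)"
  show "Poly_Mapping.lookup ?M0 (Z ?n) \<noteq> 0" by (simp add: lkM)
  fix mon i assume nz: "Poly_Mapping.lookup (H p q r l :: 'a mpoly) mon \<noteq> 0" and yi: "Poly_Mapping.lookup mon (Z i) \<noteq> 0"
  from H_nz[OF nz] show "i \<le> ?n \<and> (i = ?n \<longrightarrow> mon = ?M0)"
  proof (elim disjE bexE)
    fix u assume "M1 u = mon" thus ?thesis using yi by (auto simp: lkM)
  next
    fix s assume s: "s \<in> S2 q r l" "M2 s = mon"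
    obtain v w where sv: "s = (v,w)" by (cases s)
    have "w = i" using yi unfolding s(2)[symmetric] sv by (simp add: lkM split: if_splits)
    moreover have "2*v + w = l" "q \<le> v" using s sv by (auto simp: S2_def)
    ultimately have "i \<le> ?n" "i = ?n \<longrightarrow> v = q" using assms by linarith+
    thus ?thesis using s sv \<open>w = i\<close> by auto
  next
    fix s assume s: "s \<in> S3 q r l" "M3 s = mon"
    obtain v w where sv: "s = (v,w)" by (cases s)
    have "w = i" using yi unfolding s(2)[symmetric] sv by (simp add: lkM split: if_splits)
    moreover have "v + 2*w = l" "q \<le> v" using s sv by (auto simp: S3_def)
    ultimately show ?thesis using assms by linarith
  next
    fix s assume s: "s \<in> S4 p q r l" "M4 s = mon"
    obtain u v w where sv: "s = (u,v,w)" by (cases s)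
    have "w = i" using yi unfolding s(2)[symmetric] sv by (simp add: lkM split: if_splits)
    moreover have "u + v + w = l" "q \<le> v" "p \<le> u" using s sv by (auto simp: S4_def)
    ultimately show ?thesis using assms by linarith
  qed
next
  let ?n = "l - 2*q" and ?M0 = "M2 (q, l-2*q)"
  have a: "\<forall>s\<in>S1 p l. M1 s \<noteq> ?M0" by (auto intro!: neq_lk[where k="Y q"] simp: lkM)
  have b: "\<forall>s\<in>S3 q r l. M3 s \<noteq> ?M0"
  proof
    fix s assume s: "s \<in> S3 q r l"
    obtain v w where sv: "s = (v,w)" by (cases s)
    have "Poly_Mapping.lookup (M3 s) (Y q) \<noteq> Poly_Mapping.lookup ?M0 (Y q)" using sv by (simp add: lkM)
    thus "M3 s \<noteq> ?M0" by (rule neq_lk)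
  qed
  have c: "\<forall>s\<in>S2 q r l. M2 s = ?M0 \<longleftrightarrow> s = (q, ?n)"
  proof
    fix s assume s: "s \<in> S2 q r l"
    obtain v w where sv: "s = (v,w)" by (cases s)
    show "M2 s = ?M0 \<longleftrightarrow> s = (q, ?n)"
    proof
      assume e: "M2 s = ?M0"
      have "Poly_Mapping.lookup (M2 s) (Y q) = Poly_Mapping.lookup ?M0 (Y q)" using e by simp
      hence "v = q" using sv by (simp add: lkM split: if_splits)
      moreover have "2*v + w = l" using s sv by (auto simp: S2_def)
      ultimately show "s = (q, ?n)" using sv by auto
    qed simp
  qed
  have d: "\<forall>s\<in>S4 p q r l. M4 s \<noteq> ?M0"
  proof
    fix s assume s: "s \<in> S4 p q r l"
    obtain u v w where sv: "s = (u,v,w)" by (cases s)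
    have "Poly_Mapping.lookup (M4 s) (Y q) \<noteq> Poly_Mapping.lookup ?M0 (Y q)" using sv by (simp add: lkM)
    thus "M4 s \<noteq> ?M0" by (rule neq_lk)
  qed
  have c0: "(q, ?n) \<in> S2 q r l" using assms by (auto simp: S2_def)
  show "Poly_Mapping.lookup (H p q r l :: 'a mpoly) ?M0 = 1" unfolding H_def lookup_add
    using lk0[where 'a='a, OF a] lk1[where 'a='a, OF fin_S(2) c0 c] lk0[where 'a='a, OF b] lk0[where 'a='a, OF d] by simp
qed

lemma VM1: "Var (X u)^2 = (Poly_Mapping.single (M1 u) 1 :: 'a::comm_semiring_1 mpoly)"
  by (simp only: Var_sq M1_def)
lemma VM2: "Var (Y v)^2 * Var (Z w) = (Poly_Mapping.single (M2 (v,w)) 1 :: 'a::comm_semiring_1 mpoly)"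
  by (simp only: Var_sq) (simp add: M2_def Var_def mult_single add.commute)
lemma VM3: "Var (Y v) * Var (Z w)^2 = (Poly_Mapping.single (M3 (v,w)) 1 :: 'a::comm_semiring_1 mpoly)"
  by (simp only: Var_sq) (simp add: M3_def Var_def mult_single add.commute)

theorem lemma4p4:
  fixes m p q r l :: nat
  assumes char2: "CHAR('a::field) = 2"
    and p: "1 \<le> p" "p \<le> m + 1" and q: "1 \<le> q" "q \<le> m + 1" and r: "1 \<le> r" "r \<le> m + 1"
    and l: "l \<le> m"
  shows "((Gc m p q r l :: 'a mpoly) =
           (\<Sum>u\<in>{u. p \<le> u \<and> 2*u = l}. Var (X u)^2)
         + (\<Sum>(v,w)\<in>{(v,w). q \<le> v \<and> r \<le> w \<and> 2*v + w = l}. Var (Y v)^2 * Var (Z w))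
         + (\<Sum>(v,w)\<in>{(v,w). q \<le> v \<and> r \<le> w \<and> v + 2*w = l}. Var (Y v) * Var (Z w)^2)
         + (\<Sum>(u,v,w)\<in>{(u,v,w). p \<le> u \<and> q \<le> v \<and> r \<le> w \<and> u + v + w = l}.
               Var (X u) * Var (Y v) * Var (Z w)))
    \<and> (l < 2*p \<and> l < 2*q + r \<and> l < q + 2*r \<longrightarrow> (Gc m p q r l :: 'a mpoly) = 0)
    \<and> (l = 2*p \<and> l < 2*q + r \<and> l < q + 2*r \<longrightarrow> (Gc m p q r l :: 'a mpoly) = Var (X p)^2)
    \<and> (p > q \<and> q = r \<and> l = 2*p \<and> 2*p = 3*q \<longrightarrow>
           (Gc m p q r l :: 'a mpoly) = Var (X p)^2 + Var (Y q)^2 * Var (Z q) + Var (Y q) * Var (Z q)^2)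
    \<and> (p \<ge> q \<and> q > r \<and> l \<ge> 2*p \<and> 2*p = q + 2*r \<longrightarrow>
           Ty (Gc m p q r l :: 'a mpoly) = Var (Y (l - 2*r)) * Var (Z r)^2)
    \<and> (p \<ge> r \<and> r > q \<and> l \<ge> 2*p \<and> 2*p = 2*q + r \<longrightarrow>
           Tz (Gc m p q r l :: 'a mpoly) = Var (Y q)^2 * Var (Z (l - 2*q)))
    \<and> (p > q \<and> q = r \<and> l > 3*q \<longrightarrow>
           Ty (Gc m p q r l :: 'a mpoly) = Var (Y (l - 2*q)) * Var (Z q)^2)
    \<and> (p > q \<and> q = r \<and> l > 3*q \<longrightarrow>
           Tz (Gc m p q r l :: 'a mpoly) = Var (Y q)^2 * Var (Z (l - 2*q)))"
proof -
  have G: "(Gc m p q r l :: 'a mpoly) = H p q r l" by (rule Gc_H[OF char2 l])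
  have P1: "l < 2*p \<and> l < 2*q + r \<and> l < q + 2*r \<longrightarrow> (Gc m p q r l :: 'a mpoly) = 0"
  proof
    assume h: "l < 2*p \<and> l < 2*q + r \<and> l < q + 2*r"
    have "S1 p l = {}" "S2 q r l = {}" "S3 q r l = {}" "S4 p q r l = {}"
      using h by (auto simp: S1_def S2_def S3_def S4_def)
    thus "(Gc m p q r l :: 'a mpoly) = 0" unfolding G H_def by simp
  qed
  have P2: "l = 2*p \<and> l < 2*q + r \<and> l < q + 2*r \<longrightarrow> (Gc m p q r l :: 'a mpoly) = Var (X p)^2"
  proof
    assume h: "l = 2*p \<and> l < 2*q + r \<and> l < q + 2*r"
    have "S1 p l = {p}" "S2 q r l = {}" "S3 q r l = {}" "S4 p q r l = {}"
      using h by (auto simp: S1_def S2_def S3_def S4_def)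
    thus "(Gc m p q r l :: 'a mpoly) = Var (X p)^2" unfolding G H_def by (simp add: VM1)
  qed
  have P3: "p > q \<and> q = r \<and> l = 2*p \<and> 2*p = 3*q \<longrightarrow>
           (Gc m p q r l :: 'a mpoly) = Var (X p)^2 + Var (Y q)^2 * Var (Z q) + Var (Y q) * Var (Z q)^2"
  proof
    assume h: "p > q \<and> q = r \<and> l = 2*p \<and> 2*p = 3*q"
    have "S1 p l = {p}" "S2 q r l = {(q,q)}" "S3 q r l = {(q,q)}" "S4 p q r l = {}"
      using h by (auto simp: S1_def S2_def S3_def S4_def)
    thus "(Gc m p q r l :: 'a mpoly) = Var (X p)^2 + Var (Y q)^2 * Var (Z q) + Var (Y q) * Var (Z q)^2"
      unfolding G H_def by (simp add: VM1 VM2 VM3)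
  qed
  have P4: "p \<ge> q \<and> q > r \<and> l \<ge> 2*p \<and> 2*p = q + 2*r \<longrightarrow>
           Ty (Gc m p q r l :: 'a mpoly) = Var (Y (l - 2*r)) * Var (Z r)^2"
    unfolding G VM3 by (intro impI H_Ty) auto
  have P5: "p \<ge> r \<and> r > q \<and> l \<ge> 2*p \<and> 2*p = 2*q + r \<longrightarrow>
           Tz (Gc m p q r l :: 'a mpoly) = Var (Y q)^2 * Var (Z (l - 2*q))"
    unfolding G VM2 by (intro impI H_Tz) auto
  have P6: "p > q \<and> q = r \<and> l > 3*q \<longrightarrow>
           Ty (Gc m p q r l :: 'a mpoly) = Var (Y (l - 2*q)) * Var (Z q)^2"
    unfolding G VM3 by (intro impI) (auto intro!: H_Ty)
  have P7: "p > q \<and> q = r \<and> l > 3*q \<longrightarrow>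
           Tz (Gc m p q r l :: 'a mpoly) = Var (Y q)^2 * Var (Z (l - 2*q))"
    unfolding G VM2 by (intro impI H_Tz) auto
  show ?thesis using Gc_formula[OF char2 l] P1 P2 P3 P4 P5 P6 P7 by blast
qed

end
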